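(* Let $r,l,\tilde{l}>0$ and let $E\subset\mathbb{R}^5$ be the four-dimensional ellipsoid $$\frac{x_0^2}{r^2}+\frac{x_1^2+x_2^2}{l^2}+\frac{x_3^2+x_4^2}{\tilde{l}^2}=1$$ equipped with the metric $ds^2=\sum_{a=1}^4 e^a\otimes e^a$, where in coordinates $\rho\in[0,\pi]$, $\theta\in[0,\tfrac{\pi}{2}]$, $\varphi,\chi\in[0,2\pi]$, $$e^1=l\sin\rho\cos\theta\,d\varphi,\quad e^2=\tilde{l}\sin\rho\sin\theta\,d\chi,\quad e^3=f\sin\rho\,d\theta+h\,d\rho,\quad e^4=g\,d\rho,$$ with $f=\sqrt{l^2\sin^2\theta+\tilde{l}^2\cos^2\theta}$, $g=\sqrt{r^2\sin^2\rho+l^2\tilde{l}^2f^{-2}\cos^2\rho}$, $h=\frac{\tilde{l}^2-l^2}{f}\cos\rho\sin\theta\cos\theta$. (This is the metric induced on $E$ from the Euclidean metric of $\mathbb{R}^5$ via $x_0=r\cos\rho$, $(x_1,x_2)=l\sin\rho\cos\theta(\cos\varphi,\sin\varphi)$, $(x_3,x_4)=\tilde{l}\sin\rho\sin\theta(\cos\chi,\sin\chi)$.) Then this metric is Einstein, i.e. its Ricci tensor satisfies $R_{ab}=\lambda\delta_{ab}$ for some constant $\lambda\in\mathbb{R}$, if and only if $r=l=\tilde{l}$.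
   Context: A Riemannian metric is Einstein if its Ricci tensor is a constant multiple of the metric. For $r=l=\tilde{l}$ the metric above is the round four-sphere of radius $r$. *)

theory Defs
  imports "HOL-Analysis.Analysis"
begin

text \<open>Coordinates on the chart of the ellipsoid: a point of the chart is
  x :: real^4 with x$1 = rho, x$2 = theta, x$3 = varphi, x$4 = chi.
  Frame index a = 1..4 corresponds to e^1..e^4.\<close>

definition ell_f :: "real \<Rightarrow> real \<Rightarrow> real \<Rightarrow> real" where
  "ell_f l lt \<theta> = sqrt (l\<^sup>2 * (sin \<theta>)\<^sup>2 + lt\<^sup>2 * (cos \<theta>)\<^sup>2)"

definition ell_g :: "real \<Rightarrow> real \<Rightarrow> real \<Rightarrow> real \<Rightarrow> real \<Rightarrow> real" where
  "ell_g r l lt \<rho> \<theta> =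
     sqrt (r\<^sup>2 * (sin \<rho>)\<^sup>2 + l\<^sup>2 * lt\<^sup>2 / (ell_f l lt \<theta>)\<^sup>2 * (cos \<rho>)\<^sup>2)"

definition ell_h :: "real \<Rightarrow> real \<Rightarrow> real \<Rightarrow> real \<Rightarrow> real" where
  "ell_h l lt \<rho> \<theta> = (lt\<^sup>2 - l\<^sup>2) / ell_f l lt \<theta> * cos \<rho> * sin \<theta> * cos \<theta>"

text \<open>Coframe coefficients: row a, column i gives the coefficient of dx^i in e^a.\<close>
definition ell_frame :: "real \<Rightarrow> real \<Rightarrow> real \<Rightarrow> real^4 \<Rightarrow> real^4^4" where
  "ell_frame r l lt x = (let \<rho> = x$1; \<theta> = x$2 in
     vector [vector [0, 0, l * sin \<rho> * cos \<theta>, 0],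
             vector [0, 0, 0, lt * sin \<rho> * sin \<theta>],
             vector [ell_h l lt \<rho> \<theta>, ell_f l lt \<theta> * sin \<rho>, 0, 0],
             vector [ell_g r l lt \<rho> \<theta>, 0, 0, 0]])"

definition ell_metric :: "real \<Rightarrow> real \<Rightarrow> real \<Rightarrow> real^4 \<Rightarrow> real^4^4" where
  "ell_metric r l lt x = transpose (ell_frame r l lt x) ** ell_frame r l lt x"

text \<open>Chart domain (open, dense in the ellipsoid): 0 < rho < pi, 0 < theta < pi/2.\<close>
definition ell_chart :: "(real^4) set" where
  "ell_chart = {x. 0 < x$1 \<and> x$1 < pi \<and> 0 < x$2 \<and> x$2 < pi / 2}"

definition pd :: "4 \<Rightarrow> (real^4 \<Rightarrow> real) \<Rightarrow> real^4 \<Rightarrow> real" where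
  "pd k F x = deriv (\<lambda>t. F (x + t *\<^sub>R axis k 1)) 0"

definition christoffel :: "(real^4 \<Rightarrow> real^4^4) \<Rightarrow> 4 \<Rightarrow> 4 \<Rightarrow> 4 \<Rightarrow> real^4 \<Rightarrow> real" where
  "christoffel G k i j x = (1/2) * (\<Sum>m\<in>UNIV. matrix_inv (G x) $ k $ m *
      (pd i (\<lambda>y. G y $ m $ j) x + pd j (\<lambda>y. G y $ m $ i) x - pd m (\<lambda>y. G y $ i $ j) x))"

text \<open>Ricci tensor R_ij = R^k_{ikj} of a metric G, in coordinates.\<close>
definition ricci :: "(real^4 \<Rightarrow> real^4^4) \<Rightarrow> 4 \<Rightarrow> 4 \<Rightarrow> real^4 \<Rightarrow> real" where
  "ricci G i j x = (\<Sum>k\<in>UNIV.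
      pd k (christoffel G k i j) x - pd j (christoffel G k i k) x
      + (\<Sum>p\<in>UNIV. christoffel G k k p x * christoffel G p i j x
                   - christoffel G k j p x * christoffel G p i k x))"

text \<open>Einstein: Ric = lambda * g for a constant lambda on the chart
  (equivalently R_ab = lambda delta_ab in the orthonormal frame).\<close>
definition einstein_on :: "(real^4 \<Rightarrow> real^4^4) \<Rightarrow> (real^4) set \<Rightarrow> bool" where
  "einstein_on G U \<longleftrightarrow> (\<exists>c::real. \<forall>x\<in>U. \<forall>i j. ricci G i j x = c * G x $ i $ j)"

end

theory Submission
  imports Defs
begin

definition GamF :: "real^4^4 \<Rightarrow> (4 \<Rightarrow> real^4^4) \<Rightarrow> 4 \<Rightarrow> 4 \<Rightarrow> 4 \<Rightarrow> real" where
  "GamF N D k i j = (1/2) * (\<Sum>m\<in>UNIV. N$k$m * (D i $m$j + D j $m$i - D m $i$j))"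

definition DGamF :: "real^4^4 \<Rightarrow> (4 \<Rightarrow> real^4^4) \<Rightarrow> (4 \<Rightarrow> 4 \<Rightarrow> real^4^4) \<Rightarrow> 4 \<Rightarrow> 4 \<Rightarrow> 4 \<Rightarrow> 4 \<Rightarrow> real" where
  "DGamF N D D2 l k i j = (1/2) * (\<Sum>m\<in>UNIV. (- (N ** D l ** N)$k$m) * (D i $m$j + D j $m$i - D m $i$j)
       + N$k$m * (D2 l i $m$j + D2 l j $m$i - D2 l m $i$j))"

definition RicF :: "real^4^4 \<Rightarrow> (4 \<Rightarrow> real^4^4) \<Rightarrow> (4 \<Rightarrow> 4 \<Rightarrow> real^4^4) \<Rightarrow> 4 \<Rightarrow> 4 \<Rightarrow> real" where
  "RicF N D D2 i j = (\<Sum>k\<in>UNIV. DGamF N D D2 k k i j - DGamF N D D2 j k i k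
      + (\<Sum>p\<in>UNIV. GamF N D k k p * GamF N D p i j - GamF N D k j p * GamF N D p i k))"

lemma matrix_inv_eqI:
  fixes A B :: "real^4^4"
  assumes "A ** B = mat 1"
  shows "matrix_inv A = B"
proof -
  have BA: "B ** A = mat 1" using assms matrix_left_right_inverse by blast
  have ex: "\<exists>A'. A ** A' = mat 1 \<and> A' ** A = mat 1" using assms BA by blast
  define M where "M = matrix_inv A"
  have M: "A ** M = mat 1 \<and> M ** A = mat 1"
    unfolding M_def matrix_inv_def using someI_ex[OF ex] by blast
  have "M = M ** (A ** B)" using assms by (simp add: matrix_mul_rid)
  also have "\<dots> = (M ** A) ** B" by (simp add: matrix_mul_assoc)
  also have "\<dots> = B" using M by (simp add: matrix_mul_lid)
  finally show ?thesis by (simp add: M_def)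
qed

lemma ev_line:
  fixes x v :: "real^4"
  assumes "open S" "x \<in> S"
  shows "eventually (\<lambda>t. x + t *\<^sub>R v \<in> S) (nhds 0)"
proof -
  have o: "open ((\<lambda>t::real. x + t *\<^sub>R v) -` S)"
    by (intro open_vimage assms continuous_intros)
  show ?thesis unfolding eventually_nhds
    by (rule exI[of _ "(\<lambda>t::real. x + t *\<^sub>R v) -` S"]) (use o assms in auto)
qed

lemma ricci_formula:
  fixes G N :: "real^4 \<Rightarrow> real^4^4" and DG :: "4 \<Rightarrow> real^4 \<Rightarrow> real^4^4"
    and D2G :: "4 \<Rightarrow> 4 \<Rightarrow> real^4 \<Rightarrow> real^4^4"
  assumes S: "open S" "x \<in> S"
  and dG: "\<And>y k i j. y \<in> S \<Longrightarrow> ((\<lambda>t. G (y + t *\<^sub>R axis k 1) $ i $ j) has_real_derivative DG k y $ i $ j) (at 0)"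
  and d2G: "\<And>l k i j. ((\<lambda>t. DG k (x + t *\<^sub>R axis l 1) $ i $ j) has_real_derivative D2G l k x $ i $ j) (at 0)"
  and inv: "\<And>y. y \<in> S \<Longrightarrow> G y ** N y = mat 1"
  and dN: "\<And>l a b. (\<lambda>t. N (x + t *\<^sub>R axis l 1) $ a $ b) differentiable (at 0)"
  shows "ricci G i j x = RicF (N x) (\<lambda>k. DG k x) (\<lambda>l k. D2G l k x) i j"
proof -
  have chr: "christoffel G k i j y = GamF (N y) (\<lambda>k. DG k y) k i j" if y: "y \<in> S" for y k i j
  proof -
    have pdG: "pd a (\<lambda>y. G y $ b $ c) y = DG a y $ b $ c" for a b c
      unfolding pd_def using dG[OF y] by (simp add: DERIV_imp_deriv)
    show ?thesis unfolding christoffel_def GamF_def pdG matrix_inv_eqI[OF inv[OF y]] ..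
  qed
  have pdchr: "pd l (christoffel G k i j) x = DGamF (N x) (\<lambda>k. DG k x) (\<lambda>l k. D2G l k x) l k i j" for l k i j
  proof -
    let ?y = "\<lambda>t::real. x + t *\<^sub>R axis l 1"
    have ev: "eventually (\<lambda>t. ?y t \<in> S) (nhds 0)" using ev_line[OF S] .
    define dn where "dn = (\<chi> a b. deriv (\<lambda>t. N (?y t) $ a $ b) 0)"
    have dnD: "((\<lambda>t. N (?y t) $ a $ b) has_real_derivative dn $ a $ b) (at 0)" for a b
      unfolding dn_def using dN[of l a b] DERIV_deriv_iff_real_differentiable by simp
    have GD: "G x ** dn = - (DG l x ** N x)"
    proof -
      have "(G x ** dn) $ a $ c = (- (DG l x ** N x)) $ a $ c" for a c
      proof -
        have d1: "((\<lambda>t. \<Sum>b\<in>UNIV. G (?y t) $ a $ b * N (?y t) $ b $ c) has_real_derivative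
                (\<Sum>b\<in>UNIV. DG l x $ a $ b * N x $ b $ c + G x $ a $ b * dn $ b $ c)) (at 0)"
        proof (rule DERIV_sum)
          fix b
          show "((\<lambda>t. G (?y t) $ a $ b * N (?y t) $ b $ c) has_real_derivative
                DG l x $ a $ b * N x $ b $ c + G x $ a $ b * dn $ b $ c) (at 0)"
            using DERIV_mult[OF dG[OF S(2), of l a b] dnD[of b c]] by (simp add: mult.commute)
        qed
        have "\<forall>\<^sub>F t in nhds 0. (G (?y t) ** N (?y t)) $ a $ c = mat 1 $ a $ c"
          using ev by eventually_elim (simp add: inv)
        then have ev2: "eventually (\<lambda>t. (\<Sum>b\<in>UNIV. G (?y t) $ a $ b * N (?y t) $ b $ c) = mat 1 $ a $ c) (nhds 0)"
          by (simp add: matrix_matrix_mult_def)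
        have d2: "((\<lambda>t. \<Sum>b\<in>UNIV. G (?y t) $ a $ b * N (?y t) $ b $ c) has_real_derivative 0) (at 0)"
          using DERIV_cong_ev[OF refl ev2 refl] DERIV_const by blast
        have "(\<Sum>b\<in>UNIV. DG l x $ a $ b * N x $ b $ c + G x $ a $ b * dn $ b $ c) = 0"
          using DERIV_unique[OF d1 d2] .
        then show ?thesis
          by (simp add: matrix_matrix_mult_def sum.distrib eq_neg_iff_add_eq_0 add.commute)
      qed
      then show ?thesis by (simp add: vec_eq_iff)
    qed
    have NG: "N x ** G x = mat 1" using inv[OF S(2)] matrix_left_right_inverse by blast
    have dnv: "dn = - (N x ** DG l x ** N x)"
    proof -
      have "dn = (N x ** G x) ** dn" by (simp add: NG matrix_mul_lid)
      also have "\<dots> = N x ** (G x ** dn)" by (simp add: matrix_mul_assoc)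
      also have "\<dots> = N x ** (- (DG l x ** N x))" unfolding GD ..
      also have "\<dots> = - (N x ** (DG l x ** N x))"
        by (simp add: vec_eq_iff matrix_matrix_mult_def sum_negf)
      also have "\<dots> = - (N x ** DG l x ** N x)" by (simp add: matrix_mul_assoc)
      finally show ?thesis .
    qed
    have dNx: "((\<lambda>t. N (?y t) $ a $ b) has_real_derivative (- (N x ** DG l x ** N x)) $ a $ b) (at 0)" for a b
      using dnD[of a b] unfolding dnv .
    have dGam: "((\<lambda>t. GamF (N (?y t)) (\<lambda>k. DG k (?y t)) k i j) has_real_derivative
          DGamF (N x) (\<lambda>k. DG k x) (\<lambda>l k. D2G l k x) l k i j) (at 0)"
      unfolding GamF_def DGamF_def
      apply (rule DERIV_cmult)
      apply (rule DERIV_sum)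
      apply (rule DERIV_mult[where f="\<lambda>t. N (?y t) $ k $ _", simplified, THEN DERIV_cong])
        apply (rule dNx)
       apply (rule DERIV_diff[OF DERIV_add[OF d2G d2G] d2G])
      apply (simp add: mult.commute)
      done
    have ev3: "eventually (\<lambda>t. christoffel G k i j (?y t) = GamF (N (?y t)) (\<lambda>k. DG k (?y t)) k i j) (nhds 0)"
      using ev by eventually_elim (rule chr)
    have "pd l (christoffel G k i j) x = deriv (\<lambda>t. GamF (N (?y t)) (\<lambda>k. DG k (?y t)) k i j) 0"
      unfolding pd_def by (rule deriv_cong_ev[OF ev3 refl])
    also have "\<dots> = DGamF (N x) (\<lambda>k. DG k x) (\<lambda>l k. D2G l k x) l k i j"
      using dGam by (rule DERIV_imp_deriv)
    finally show ?thesis .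
  qed
  show ?thesis
    unfolding ricci_def RicF_def pdchr chr[OF S(2)] ..
qed


definition blk :: "real \<Rightarrow> real \<Rightarrow> real \<Rightarrow> real \<Rightarrow> real \<Rightarrow> real^4^4" where
  "blk a b c p q = vector [vector [a, b, 0, 0], vector [b, c, 0, 0], vector [0, 0, p, 0], vector [0, 0, 0, q]]"

lemma vector_4 [simp]:
 "(vector [x,y,z,w] ::('a::zero)^4)$1 = x"
 "(vector [x,y,z,w] ::('a::zero)^4)$2 = y"
 "(vector [x,y,z,w] ::('a::zero)^4)$3 = z"
 "(vector [x,y,z,w] ::('a::zero)^4)$4 = w"
  unfolding vector_def by simp_all

lemma blk_entries:
  "blk a b c p q $ 1 $ 1 = a" "blk a b c p q $ 1 $ 2 = b" "blk a b c p q $ 1 $ 3 = 0" "blk a b c p q $ 1 $ 4 = 0"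
  "blk a b c p q $ 2 $ 1 = b" "blk a b c p q $ 2 $ 2 = c" "blk a b c p q $ 2 $ 3 = 0" "blk a b c p q $ 2 $ 4 = 0"
  "blk a b c p q $ 3 $ 1 = 0" "blk a b c p q $ 3 $ 2 = 0" "blk a b c p q $ 3 $ 3 = p" "blk a b c p q $ 3 $ 4 = 0"
  "blk a b c p q $ 4 $ 1 = 0" "blk a b c p q $ 4 $ 2 = 0" "blk a b c p q $ 4 $ 3 = 0" "blk a b c p q $ 4 $ 4 = q"
  by (simp_all add: blk_def)

lemma blk_deriv:
  assumes "(a has_real_derivative a') F" "(b has_real_derivative b') F" "(c has_real_derivative c') F"
    "(p has_real_derivative p') F" "(q has_real_derivative q') F"
  shows "((\<lambda>t. blk (a t) (b t) (c t) (p t) (q t) $ i $ j) has_real_derivative blk a' b' c' p' q' $ i $ j) F"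
  using exhaust_4[of i] exhaust_4[of j] assms by (auto simp: blk_entries)

definition EA :: "real \<Rightarrow> real \<Rightarrow> real \<Rightarrow> real \<Rightarrow> real \<Rightarrow> real" where
  "EA R L T p q = R * sin p ^ 2 + cos p ^ 2 * (L * cos q ^ 2 + T * sin q ^ 2)"
definition EB :: "real \<Rightarrow> real \<Rightarrow> real \<Rightarrow> real \<Rightarrow> real \<Rightarrow> real" where
  "EB R L T p q = (T - L) * sin p * cos p * sin q * cos q"
definition EC :: "real \<Rightarrow> real \<Rightarrow> real \<Rightarrow> real \<Rightarrow> real \<Rightarrow> real" where
  "EC R L T p q = sin p ^ 2 * (L * sin q ^ 2 + T * cos q ^ 2)"
definition EP :: "real \<Rightarrow> real \<Rightarrow> real \<Rightarrow> real \<Rightarrow> real \<Rightarrow> real" where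
  "EP R L T p q = L * sin p ^ 2 * cos q ^ 2"
definition EQq :: "real \<Rightarrow> real \<Rightarrow> real \<Rightarrow> real \<Rightarrow> real \<Rightarrow> real" where
  "EQq R L T p q = T * sin p ^ 2 * sin q ^ 2"
definition ED :: "real \<Rightarrow> real \<Rightarrow> real \<Rightarrow> real \<Rightarrow> real \<Rightarrow> real" where
  "ED R L T p q = EA R L T p q * EC R L T p q - EB R L T p q * EB R L T p q"

definition Mf :: "real \<Rightarrow> real \<Rightarrow> real \<Rightarrow> real \<Rightarrow> real \<Rightarrow> real^4^4" where
  "Mf R L T p q = blk (EA R L T p q) (EB R L T p q) (EC R L T p q) (EP R L T p q) (EQq R L T p q)"

definition Ninv :: "real \<Rightarrow> real \<Rightarrow> real \<Rightarrow> real \<Rightarrow> real \<Rightarrow> real^4^4" where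
  "Ninv R L T p q = blk (EC R L T p q / ED R L T p q) (- EB R L T p q / ED R L T p q)
     (EA R L T p q / ED R L T p q) (1 / EP R L T p q) (1 / EQq R L T p q)"

definition Mr :: "real \<Rightarrow> real \<Rightarrow> real \<Rightarrow> real \<Rightarrow> real \<Rightarrow> real^4^4" where
  "Mr R L T p q = blk (2 * sin p * cos p * (R - L * cos q ^ 2 - T * sin q ^ 2))
     ((T - L) * (cos p ^ 2 - sin p ^ 2) * sin q * cos q)
     (2 * sin p * cos p * (L * sin q ^ 2 + T * cos q ^ 2))
     (2 * L * sin p * cos p * cos q ^ 2) (2 * T * sin p * cos p * sin q ^ 2)"

definition Mt :: "real \<Rightarrow> real \<Rightarrow> real \<Rightarrow> real \<Rightarrow> real \<Rightarrow> real^4^4" where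
  "Mt R L T p q = blk (2 * cos p ^ 2 * sin q * cos q * (T - L))
     ((T - L) * sin p * cos p * (cos q ^ 2 - sin q ^ 2))
     (2 * sin p ^ 2 * sin q * cos q * (L - T))
     (- 2 * L * sin p ^ 2 * cos q * sin q) (2 * T * sin p ^ 2 * sin q * cos q)"

definition Mrr :: "real \<Rightarrow> real \<Rightarrow> real \<Rightarrow> real \<Rightarrow> real \<Rightarrow> real^4^4" where
  "Mrr R L T p q = blk (2 * (cos p ^ 2 - sin p ^ 2) * (R - L * cos q ^ 2 - T * sin q ^ 2))
     (- 4 * (T - L) * sin p * cos p * sin q * cos q)
     (2 * (cos p ^ 2 - sin p ^ 2) * (L * sin q ^ 2 + T * cos q ^ 2))
     (2 * L * (cos p ^ 2 - sin p ^ 2) * cos q ^ 2) (2 * T * (cos p ^ 2 - sin p ^ 2) * sin q ^ 2)"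

definition Mrt :: "real \<Rightarrow> real \<Rightarrow> real \<Rightarrow> real \<Rightarrow> real \<Rightarrow> real^4^4" where
  "Mrt R L T p q = blk (4 * sin p * cos p * sin q * cos q * (L - T))
     ((T - L) * (cos p ^ 2 - sin p ^ 2) * (cos q ^ 2 - sin q ^ 2))
     (4 * sin p * cos p * sin q * cos q * (L - T))
     (- 4 * L * sin p * cos p * cos q * sin q) (4 * T * sin p * cos p * sin q * cos q)"

definition Mtt :: "real \<Rightarrow> real \<Rightarrow> real \<Rightarrow> real \<Rightarrow> real \<Rightarrow> real^4^4" where
  "Mtt R L T p q = blk (2 * cos p ^ 2 * (T - L) * (cos q ^ 2 - sin q ^ 2))
     (- 4 * (T - L) * sin p * cos p * sin q * cos q)
     (2 * sin p ^ 2 * (L - T) * (cos q ^ 2 - sin q ^ 2))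
     (- 2 * L * sin p ^ 2 * (cos q ^ 2 - sin q ^ 2)) (2 * T * sin p ^ 2 * (cos q ^ 2 - sin q ^ 2))"

lemma dMf_r: "((\<lambda>t. Mf R L T (p + t) q $ i $ j) has_real_derivative Mr R L T p q $ i $ j) (at 0)"
  unfolding Mf_def Mr_def EA_def EB_def EC_def EP_def EQq_def
  by (rule blk_deriv; auto intro!: derivative_eq_intros simp: power2_eq_square algebra_simps)

lemma dMf_t: "((\<lambda>t. Mf R L T p (q + t) $ i $ j) has_real_derivative Mt R L T p q $ i $ j) (at 0)"
  unfolding Mf_def Mt_def EA_def EB_def EC_def EP_def EQq_def
  by (rule blk_deriv; auto intro!: derivative_eq_intros simp: power2_eq_square algebra_simps)

lemma dMr_r: "((\<lambda>t. Mr R L T (p + t) q $ i $ j) has_real_derivative Mrr R L T p q $ i $ j) (at 0)"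
  unfolding Mr_def Mrr_def
  by (rule blk_deriv; auto intro!: derivative_eq_intros simp: power2_eq_square algebra_simps)

lemma dMr_t: "((\<lambda>t. Mr R L T p (q + t) $ i $ j) has_real_derivative Mrt R L T p q $ i $ j) (at 0)"
  unfolding Mr_def Mrt_def
  by (rule blk_deriv; auto intro!: derivative_eq_intros simp: power2_eq_square algebra_simps)

lemma dMt_r: "((\<lambda>t. Mt R L T (p + t) q $ i $ j) has_real_derivative Mrt R L T p q $ i $ j) (at 0)"
  unfolding Mt_def Mrt_def
  by (rule blk_deriv; auto intro!: derivative_eq_intros simp: power2_eq_square algebra_simps)

lemma dMt_t: "((\<lambda>t. Mt R L T p (q + t) $ i $ j) has_real_derivative Mtt R L T p q $ i $ j) (at 0)"
  unfolding Mt_def Mtt_def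
  by (rule blk_deriv; auto intro!: derivative_eq_intros simp: power2_eq_square algebra_simps)

lemmas comp_derivs =
  dMf_r[of R L T p q 1 1, unfolded Mf_def blk_entries]
  dMf_r[of R L T p q 1 2, unfolded Mf_def blk_entries]
  dMf_r[of R L T p q 2 2, unfolded Mf_def blk_entries]
  dMf_r[of R L T p q 3 3, unfolded Mf_def blk_entries]
  dMf_r[of R L T p q 4 4, unfolded Mf_def blk_entries]
  dMf_t[of R L T p q 1 1, unfolded Mf_def blk_entries]
  dMf_t[of R L T p q 1 2, unfolded Mf_def blk_entries]
  dMf_t[of R L T p q 2 2, unfolded Mf_def blk_entries]
  dMf_t[of R L T p q 3 3, unfolded Mf_def blk_entries]
  dMf_t[of R L T p q 4 4, unfolded Mf_def blk_entries] for R L T p q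

lemma ED_diff:
  "\<exists>d. ((\<lambda>t. ED R L T (p + t) q) has_real_derivative d) (at 0)"
  "\<exists>d. ((\<lambda>t. ED R L T p (q + t)) has_real_derivative d) (at 0)"
  unfolding ED_def
  by (rule exI, rule DERIV_diff, (rule DERIV_mult, rule comp_derivs, rule comp_derivs)+)+

lemma Ninv_diff_r:
  assumes "ED R L T p q \<noteq> 0" "EP R L T p q \<noteq> 0" "EQq R L T p q \<noteq> 0"
  shows "\<exists>d. ((\<lambda>t. Ninv R L T (p + t) q $ i $ j) has_real_derivative d) (at 0)"
proof -
  obtain d where d: "((\<lambda>t. ED R L T (p + t) q) has_real_derivative d) (at 0)" using ED_diff by blast
  show ?thesis unfolding Ninv_def
    apply (rule exI)
    apply (rule blk_deriv)
        apply (rule DERIV_divide, rule comp_derivs, rule d, use assms in simp)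
       apply (rule DERIV_divide, rule DERIV_minus, rule comp_derivs, rule d, use assms in simp)
      apply (rule DERIV_divide, rule comp_derivs, rule d, use assms in simp)
     apply (rule DERIV_divide, rule DERIV_const, rule comp_derivs, use assms in simp)
    apply (rule DERIV_divide, rule DERIV_const, rule comp_derivs, use assms in simp)
    done
qed

lemma Ninv_diff_t:
  assumes "ED R L T p q \<noteq> 0" "EP R L T p q \<noteq> 0" "EQq R L T p q \<noteq> 0"
  shows "\<exists>d. ((\<lambda>t. Ninv R L T p (q + t) $ i $ j) has_real_derivative d) (at 0)"
proof -
  obtain d where d: "((\<lambda>t. ED R L T p (q + t)) has_real_derivative d) (at 0)" using ED_diff by blast
  show ?thesis unfolding Ninv_def
    apply (rule exI)
    apply (rule blk_deriv)
        apply (rule DERIV_divide, rule comp_derivs, rule d, use assms in simp)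
       apply (rule DERIV_divide, rule DERIV_minus, rule comp_derivs, rule d, use assms in simp)
      apply (rule DERIV_divide, rule comp_derivs, rule d, use assms in simp)
     apply (rule DERIV_divide, rule DERIV_const, rule comp_derivs, use assms in simp)
    apply (rule DERIV_divide, rule DERIV_const, rule comp_derivs, use assms in simp)
    done
qed

lemma blk_inv:
  fixes a b c p q :: real
  assumes "a * c - b * b \<noteq> 0" "p \<noteq> 0" "q \<noteq> 0"
  shows "blk a b c p q ** blk (c / (a * c - b * b)) (- b / (a * c - b * b)) (a / (a * c - b * b)) (1 / p) (1 / q) = mat 1"
proof -
  define d where "d = a * c - b * b"
  have d: "d \<noteq> 0" "a * c - b * b = d" using assms(1) d_def by auto
  have e: "a * (c / d) + b * (- b / d) = 1"
          "a * (- b / d) + b * (a / d) = 0"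
          "b * (c / d) + c * (- b / d) = 0"
          "b * (- b / d) + c * (a / d) = 1"
    using d by (simp_all add: field_simps)
  note e = e[unfolded d_def]
  show ?thesis
    using assms e by (simp add: vec_eq_iff forall_4 matrix_matrix_mult_def sum_4 mat_def blk_entries)
qed

lemma Mf_Ninv:
  assumes "ED R L T p q \<noteq> 0" "EP R L T p q \<noteq> 0" "EQq R L T p q \<noteq> 0"
  shows "Mf R L T p q ** Ninv R L T p q = mat 1"
  using assms unfolding Mf_def Ninv_def ED_def by (rule blk_inv)


lemma metric_eq:
  assumes "l > 0" "lt > 0"
  shows "ell_metric r l lt y = Mf (r^2) (l^2) (lt^2) (y$1) (y$2)"
proof -
  define p where "p = y$1"
  define q where "q = y$2"
  define f where "f = ell_f l lt q"
  have f2: "f^2 = l^2 * sin q ^ 2 + lt^2 * cos q ^ 2"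
    unfolding f_def ell_f_def by simp
  have fpos: "f > 0" unfolding f_def ell_f_def
    using assms sin_squared_eq[of q] 
    by (smt (verit) mult_pos_pos power2_less_0 real_sqrt_gt_zero sin_cos_squared_add zero_less_power2 mult_nonneg_nonneg zero_le_power2)
  have g2: "(ell_g r l lt p q)^2 = r^2 * sin p ^ 2 + l^2 * lt^2 / f^2 * cos p ^ 2"
    unfolding ell_g_def f_def by (simp add: zero_le_mult_iff)
  have h: "ell_h l lt p q = (lt^2 - l^2) / f * cos p * sin q * cos q"
    unfolding ell_h_def f_def ..
  have ff: "f * (f * X) = (l * (l * (sin q * sin q)) + lt * (lt * (cos q * cos q))) * X" for X
    using f2 by (simp add: power2_eq_square mult.assoc[symmetric])
  have key: "(lt^2 - l^2)^2 * (sin q)^2 * (cos q)^2 + l^2 * lt^2 = f^2 * (l^2 * (cos q)^2 + lt^2 * (sin q)^2)"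
    unfolding f2 cos_squared_eq by (simp add: algebra_simps power2_eq_square)
  have hg: "ell_h l lt p q * ell_h l lt p q + ell_g r l lt p q * ell_g r l lt p q =
     r\<^sup>2 * (sin p)\<^sup>2 + (cos p)\<^sup>2 * (l\<^sup>2 * (cos q)\<^sup>2 + lt\<^sup>2 * (sin q)\<^sup>2)"
  proof -
    have "ell_h l lt p q * ell_h l lt p q + ell_g r l lt p q * ell_g r l lt p q
       = r^2 * sin p ^ 2 + (cos p)^2 * (((lt^2 - l^2)^2 * (sin q)^2 * (cos q)^2 + l^2 * lt^2) / f^2)"
      unfolding h power2_eq_square[symmetric] g2 using fpos by (simp add: field_simps power2_eq_square)
    also have "\<dots> = r\<^sup>2 * (sin p)\<^sup>2 + (cos p)\<^sup>2 * (l\<^sup>2 * (cos q)\<^sup>2 + lt\<^sup>2 * (sin q)\<^sup>2)"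
      unfolding key using fpos by simp
    finally show ?thesis .
  qed
  show ?thesis
    unfolding ell_metric_def ell_frame_def Let_def p_def[symmetric] q_def[symmetric] f_def[symmetric]
    apply (simp add: vec_eq_iff forall_4 matrix_matrix_mult_def transpose_def sum_4 Mf_def blk_entries
       EA_def EB_def EC_def EP_def EQq_def)
    apply (intro conjI)
         apply (rule hg)
    using fpos f2 by (simp_all add: h field_simps power2_eq_square ff)
qed


definition DGf :: "real \<Rightarrow> real \<Rightarrow> real \<Rightarrow> 4 \<Rightarrow> real^4 \<Rightarrow> real^4^4" where
  "DGf R L T k y = (if k = 1 then Mr R L T (y$1) (y$2) else if k = 2 then Mt R L T (y$1) (y$2) else 0)"

definition D2Gf :: "real \<Rightarrow> real \<Rightarrow> real \<Rightarrow> 4 \<Rightarrow> 4 \<Rightarrow> real^4 \<Rightarrow> real^4^4" where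
  "D2Gf R L T l k y = (if k = 1 then (if l = 1 then Mrr R L T (y$1) (y$2) else if l = 2 then Mrt R L T (y$1) (y$2) else 0)
     else if k = 2 then (if l = 1 then Mrt R L T (y$1) (y$2) else if l = 2 then Mtt R L T (y$1) (y$2) else 0) else 0)"

lemma line_comp:
  fixes y :: "real^4"
  shows "(y + t *\<^sub>R axis 1 1) $ 1 = y$1 + t" "(y + t *\<^sub>R axis 1 1) $ 2 = y$2"
    "(y + t *\<^sub>R axis 2 1) $ 1 = y$1" "(y + t *\<^sub>R axis 2 1) $ 2 = y$2 + t"
    "(y + t *\<^sub>R axis 3 1) $ 1 = y$1" "(y + t *\<^sub>R axis 3 1) $ 2 = y$2"
    "(y + t *\<^sub>R axis 4 1) $ 1 = y$1" "(y + t *\<^sub>R axis 4 1) $ 2 = y$2"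
    "axis 1 (1::real) $ (1::4) = 1" "axis 1 (1::real) $ (2::4) = 0" "axis 2 (1::real) $ (1::4) = 0" "axis 2 (1::real) $ (2::4) = 1"
    "axis 3 (1::real) $ (1::4) = 0" "axis 3 (1::real) $ (2::4) = 0" "axis 4 (1::real) $ (1::4) = 0" "axis 4 (1::real) $ (2::4) = 0"
  by (simp_all add: axis_def)

lemma dG_line:
  fixes y :: "real^4"
  shows "((\<lambda>t. Mf R L T ((y + t *\<^sub>R axis k 1) $ 1) ((y + t *\<^sub>R axis k 1) $ 2) $ i $ j)
      has_real_derivative DGf R L T k y $ i $ j) (at 0)"
  using exhaust_4[of k]
  by (auto simp: line_comp DGf_def dMf_r dMf_t)

lemma d2G_line:
  fixes y :: "real^4"
  shows "((\<lambda>t. DGf R L T k (y + t *\<^sub>R axis l 1) $ i $ j)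
      has_real_derivative D2Gf R L T l k y $ i $ j) (at 0)"
  using exhaust_4[of k] exhaust_4[of l]
  by (auto simp: line_comp DGf_def D2Gf_def dMr_r dMr_t dMt_r dMt_t)

lemma N_line:
  fixes y :: "real^4"
  assumes "ED R L T (y$1) (y$2) \<noteq> 0" "EP R L T (y$1) (y$2) \<noteq> 0" "EQq R L T (y$1) (y$2) \<noteq> 0"
  shows "(\<lambda>t. Ninv R L T ((y + t *\<^sub>R axis l 1) $ 1) ((y + t *\<^sub>R axis l 1) $ 2) $ a $ b) differentiable (at 0)"
proof -
  have "\<exists>d. ((\<lambda>t. Ninv R L T ((y + t *\<^sub>R axis l 1) $ 1) ((y + t *\<^sub>R axis l 1) $ 2) $ a $ b)
     has_real_derivative d) (at 0)"
    using exhaust_4[of l] Ninv_diff_r[OF assms] Ninv_diff_t[OF assms]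
    by (auto simp: line_comp intro: exI[of _ 0])
  then show ?thesis
    using differentiable_def has_field_derivative_imp_has_derivative by blast
qed

lemma ED_eq: "ED R L T p q = sin p ^ 2 * (R * sin p ^ 2 * (L * sin q ^ 2 + T * cos q ^ 2) + L * T * cos p ^ 2)"
  unfolding ED_def EA_def EB_def EC_def
  using sin_cos_squared_add[of q] sin_cos_squared_add[of p] by algebra

lemma chart_nz:
  assumes "r > 0" "l > 0" "lt > 0" "x \<in> ell_chart"
  shows "ED (r^2) (l^2) (lt^2) (x$1) (x$2) \<noteq> 0" "EP (r^2) (l^2) (lt^2) (x$1) (x$2) \<noteq> 0"
    "EQq (r^2) (l^2) (lt^2) (x$1) (x$2) \<noteq> 0"
proof -
  have s: "sin (x$1) > 0" using assms(4) by (auto simp: ell_chart_def intro: sin_gt_zero)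
  have S: "sin (x$2) > 0" using assms(4) by (auto simp: ell_chart_def intro: sin_gt_zero)
  have K: "cos (x$2) > 0" using assms(4) by (auto simp: ell_chart_def intro: cos_gt_zero)
  show "EP (r^2) (l^2) (lt^2) (x$1) (x$2) \<noteq> 0" "EQq (r^2) (l^2) (lt^2) (x$1) (x$2) \<noteq> 0"
    using s S K assms by (simp_all add: EP_def EQq_def)
  have "ED (r^2) (l^2) (lt^2) (x$1) (x$2) > 0"
    unfolding ED_eq using s S K assms
    by (intro mult_pos_pos add_pos_nonneg) (auto intro!: mult_pos_pos add_pos_nonneg)
  then show "ED (r^2) (l^2) (lt^2) (x$1) (x$2) \<noteq> 0" by simp
qed

lemma open_chart: "open ell_chart"
proof -
  have "ell_chart = {x. 0 < x$1} \<inter> {x. x$1 < pi} \<inter> {x. 0 < x$2} \<inter> {x. x$2 < pi/2}"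
    by (auto simp: ell_chart_def)
  moreover have "open ({x::real^4. 0 < x$1} \<inter> {x. x$1 < pi} \<inter> {x. 0 < x$2} \<inter> {x. x$2 < pi/2})"
    by (intro open_Int open_halfspace_component_lt_cart open_halfspace_component_gt_cart)
  ultimately show ?thesis by simp
qed

lemma ricci_ell:
  assumes "r > 0" "l > 0" "lt > 0" "x \<in> ell_chart"
  shows "ricci (ell_metric r l lt) i j x =
    RicF (Ninv (r^2) (l^2) (lt^2) (x$1) (x$2)) (\<lambda>k. DGf (r^2) (l^2) (lt^2) k x) (\<lambda>l' k. D2Gf (r^2) (l^2) (lt^2) l' k x) i j"
proof (rule ricci_formula[where S = ell_chart and N = "\<lambda>y. Ninv (r^2) (l^2) (lt^2) (y$1) (y$2)"])
  show "open ell_chart" by (rule open_chart)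
  show "x \<in> ell_chart" by fact
  show "((\<lambda>t. ell_metric r l lt (y + t *\<^sub>R axis k 1) $ i $ j) has_real_derivative DGf (r^2) (l^2) (lt^2) k y $ i $ j) (at 0)"
    if "y \<in> ell_chart" for y k i j
    unfolding metric_eq[OF assms(2,3)] by (rule dG_line)
  show "((\<lambda>t. DGf (r^2) (l^2) (lt^2) k (x + t *\<^sub>R axis l' 1) $ i $ j) has_real_derivative D2Gf (r^2) (l^2) (lt^2) l' k x $ i $ j) (at 0)"
    for l' k i j by (rule d2G_line)
  show "ell_metric r l lt y ** Ninv (r^2) (l^2) (lt^2) (y$1) (y$2) = mat 1" if "y \<in> ell_chart" for y
    unfolding metric_eq[OF assms(2,3)] using chart_nz[OF assms(1-3) that] by (rule Mf_Ninv)
  show "(\<lambda>t. Ninv (r^2) (l^2) (lt^2) ((x + t *\<^sub>R axis l' 1) $ 1) ((x + t *\<^sub>R axis l' 1) $ 2) $ a $ b) differentiable (at 0)"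
    for l' a b using chart_nz[OF assms] by (rule N_line)
qed


definition "sN R s c S K = blk (1/R) 0 (1/(R * s^2)) (1/(R * s^2 * K^2)) (1/(R * s^2 * S^2))"
definition "sD R s c S K = (\<lambda>k::4. if k = 1 then blk 0 0 (2 * R * s * c) (2 * R * s * c * K^2) (2 * R * s * c * S^2)
   else if k = 2 then blk 0 0 0 (-2 * R * s^2 * K * S) (2 * R * s^2 * S * K) else 0)"
definition "sD2 R s c S K = (\<lambda>l::4. \<lambda>k::4. if k = 1 then (if l = 1 then blk 0 0 (2 * R * (c^2-s^2)) (2 * R * (c^2-s^2) * K^2) (2 * R * (c^2-s^2) * S^2)
     else if l = 2 then blk 0 0 0 (-4 * R * s * c * K * S) (4 * R * s * c * S * K) else 0)
   else if k = 2 then (if l = 1 then blk 0 0 0 (-4 * R * s * c * K * S) (4 * R * s * c * S * K)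
     else if l = 2 then blk 0 0 0 (-2 * R * s^2 * (K^2-S^2)) (2 * R * s^2 * (K^2-S^2)) else 0) else 0)"

lemma sD_simps:
  "sD R s c S K 1 = blk 0 0 (2 * R * s * c) (2 * R * s * c * K^2) (2 * R * s * c * S^2)"
  "sD R s c S K 2 = blk 0 0 0 (-2 * R * s^2 * K * S) (2 * R * s^2 * S * K)"
  "sD R s c S K 3 = 0" "sD R s c S K 4 = 0"
  by (simp_all add: sD_def)

lemma sD2_simps:
  "sD2 R s c S K 1 1 = blk 0 0 (2 * R * (c^2 - s^2)) (2 * R * (c^2 - s^2) * K^2) (2 * R * (c^2 - s^2) * S^2)"
  "sD2 R s c S K 2 1 = blk 0 0 0 (-4 * R * s * c * K * S) (4 * R * s * c * S * K)"
  "sD2 R s c S K 1 2 = blk 0 0 0 (-4 * R * s * c * K * S) (4 * R * s * c * S * K)"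
  "sD2 R s c S K 2 2 = blk 0 0 0 (-2 * R * s^2 * (K^2 - S^2)) (2 * R * s^2 * (K^2 - S^2))"
  "sD2 R s c S K l 3 = 0" "sD2 R s c S K l 4 = 0" "sD2 R s c S K 3 k = 0" "sD2 R s c S K 4 k = 0"
  by (simp_all add: sD2_def)

lemma mm_entry: "(A ** B) $ i $ j = (\<Sum>k\<in>UNIV. A $ i $ k * B $ k $ j)"
  by (simp add: matrix_matrix_mult_def)

lemma sph_all:
  fixes R s c S K :: real
  assumes "R > 0" "s > 0" "S > 0" "K > 0" "s^2 + c^2 = 1" "S^2 + K^2 = 1"
  shows "\<forall>i j. RicF (sN R s c S K) (sD R s c S K) (sD2 R s c S K) i j = 3 / R * blk R 0 (R * s^2) (R * s^2 * K^2) (R * s^2 * S^2) $ i $ j"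
proof -
  have nz: "R \<noteq> 0" "s \<noteq> 0" "S \<noteq> 0" "K \<noteq> 0" using assms by auto
  show ?thesis
    using assms(5,6)
    by (simp only: forall_4, intro conjI; simp only: RicF_def DGamF_def GamF_def sum_4 mm_entry sN_def sD_simps sD2_simps blk_entries
    zero_index mult_zero_left mult_zero_right add_0_left add_0_right diff_zero minus_zero diff_0 mult_1_left mult_1_right;
     (simp add: field_simps nz)?; (algebra | simp add: eval_nat_numeral mult_ac))
qed


definition "fN R L T U = blk (1/R) 0 (2/U) (2/L) (2/T)"
definition "fD R L T = (\<lambda>k::4. if k = 1 then blk 0 (-(T-L)/2) 0 0 0
   else if k = 2 then blk 0 0 (L - T) (-L) T else 0)"
definition "fD2 R L T = (\<lambda>l::4. \<lambda>k::4. if k = 1 then (if l = 1 then blk (-2 * (R - (L+T)/2)) 0 (-(L+T)) (-L) (-T)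
     else 0) else 0)"

lemma fD_simps:
  "fD R L T 1 = blk 0 (-(T-L)/2) 0 0 0" "fD R L T 2 = blk 0 0 (L - T) (-L) T"
  "fD R L T 3 = 0" "fD R L T 4 = 0"
  by (simp_all add: fD_def)

lemma fD2_simps:
  "fD2 R L T 1 1 = blk (-2 * (R - (L+T)/2)) 0 (-(L+T)) (-L) (-T)"
  "fD2 R L T 2 1 = 0" "fD2 R L T 3 1 = 0" "fD2 R L T 4 1 = 0"
  "fD2 R L T l 2 = 0" "fD2 R L T l 3 = 0" "fD2 R L T l 4 = 0"
  by (simp_all add: fD2_def)

lemma fwd_vals:
  fixes R L T :: real
  assumes "R > 0" "L > 0" "T > 0" and hU: "U = L + T"
  shows "RicF (fN R L T U) (fD R L T) (fD2 R L T) 1 1 = 2 + 4 * L * T / U^2"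
    "RicF (fN R L T U) (fD R L T) (fD2 R L T) 3 3 = L * T / (R * U) + L / U + 2 * L * T / U^2"
    "RicF (fN R L T U) (fD R L T) (fD2 R L T) 4 4 = L * T / (R * U) + T / U + 2 * L * T / U^2"
proof -
  have nz: "R \<noteq> 0" "L \<noteq> 0" "T \<noteq> 0" "U \<noteq> 0" using assms by auto
  show "RicF (fN R L T U) (fD R L T) (fD2 R L T) 1 1 = 2 + 4 * L * T / U^2"
    by (simp only: RicF_def DGamF_def GamF_def sum_4 mm_entry fN_def fD_simps fD2_simps blk_entries
    zero_index mult_zero_left mult_zero_right add_0_left add_0_right diff_zero minus_zero diff_0 mult_1_left mult_1_right;
     (simp add: field_simps nz power2_eq_square); insert hU; algebra)
  show "RicF (fN R L T U) (fD R L T) (fD2 R L T) 3 3 = L * T / (R * U) + L / U + 2 * L * T / U^2"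
    by (simp only: RicF_def DGamF_def GamF_def sum_4 mm_entry fN_def fD_simps fD2_simps blk_entries
    zero_index mult_zero_left mult_zero_right add_0_left add_0_right diff_zero minus_zero diff_0 mult_1_left mult_1_right;
     (simp add: field_simps nz power2_eq_square); insert hU; algebra)
  show "RicF (fN R L T U) (fD R L T) (fD2 R L T) 4 4 = L * T / (R * U) + T / U + 2 * L * T / U^2"
    by (simp only: RicF_def DGamF_def GamF_def sum_4 mm_entry fN_def fD_simps fD2_simps blk_entries
    zero_index mult_zero_left mult_zero_right add_0_left add_0_right diff_zero minus_zero diff_0 mult_1_left mult_1_right;
     (simp add: field_simps nz power2_eq_square); insert hU; algebra)
qed


lemma fwd_alg:
  fixes R L T U c :: real
  assumes pos: "R > 0" "L > 0" "T > 0" and hU: "U = L + T"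
  and e1: "2 + 4 * L * T / U^2 = c * R"
  and e3: "L * T / (R * U) + L / U + 2 * L * T / U^2 = c * (L / 2)"
  and e4: "L * T / (R * U) + T / U + 2 * L * T / U^2 = c * (T / 2)"
  shows "L = T \<and> R = L"
proof -
  have U: "U > 0" using pos hU by simp
  have "(L * T / (R * U) + L / U + 2 * L * T / U^2) - (L * T / (R * U) + T / U + 2 * L * T / U^2) = c * (L / 2) - c * (T / 2)"
    by (simp only: e3 e4)
  then have d: "(L - T) / U = c * (L - T) / 2" by (simp add: diff_divide_distrib algebra_simps)
  have LT: "L = T"
  proof (rule ccontr)
    assume "L \<noteq> T"
    have e: "2 * (L - T) = U * c * (L - T)" using d U by (simp add: field_simps)
    have "(L - T) * (U * c - 2) = 0" using e by (simp add: algebra_simps)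
    then have "U * c = 2" using \<open>L \<noteq> T\<close> by simp
    then have "c = 2 / U" using U by (simp add: field_simps)
    then have "c * (L / 2) = L / U" by simp
    then have "L * T / (R * U) + L / U + 2 * L * T / U^2 = L / U" using e3 by simp
    then have "L * T / (R * U) + 2 * L * T / U^2 = 0" by simp
    moreover have "L * T / (R * U) + 2 * L * T / U^2 > 0" using pos U by (intro add_pos_pos) auto
    ultimately show False by simp
  qed
  have U2: "U = 2 * L" using hU LT by simp
  have c: "c = 3 / R" using e1 U2 LT pos by (simp add: field_simps power2_eq_square)
  have "L / (2 * R) + 1 = 3 * L / (2 * R)" using e3 U2 LT c pos by (simp add: field_simps power2_eq_square)
  then have "R = L" using pos by (simp add: field_simps)
  then show ?thesis using LT by simp
qed

lemma blk_eq_iff: "blk a b c p q = blk a' b' c' p' q' \<longleftrightarrow> a = a' \<and> b = b' \<and> c = c' \<and> p = p' \<and> q = q'"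
  by (metis blk_entries)

lemma blk_zero: "blk 0 0 0 0 0 = 0"
  by (simp add: vec_eq_iff forall_4 blk_entries)

definition "x0 = (vector [pi/2, pi/4, 0, 0] :: real^4)"

lemma x0_chart: "x0 \<in> ell_chart"
  by (simp add: x0_def ell_chart_def)

lemma x0_comp: "x0 $ 1 = pi/2" "x0 $ 2 = pi/4" by (simp_all add: x0_def)

lemma h2: "(sqrt 2 / 2) * (sqrt 2 / 2) = (1/2::real)" "(sqrt 2 / 2)^2 = (1/2::real)"
  by (simp_all add: power2_eq_square)

lemma x0_N:
  assumes "R > 0" "L > 0" "T > 0"
  shows "Ninv R L T (x0$1) (x0$2) = fN R L T (L + T)"
proof -
  have a: "0 < L * (R * 2) + R * (T * 2)" "0 < L * R + R * T" using assms by (intro add_pos_pos mult_pos_pos; simp)+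
  show ?thesis
  using assms a unfolding x0_comp Ninv_def fN_def ED_def EA_def EB_def EC_def EP_def EQq_def
  by (simp add: sin_45 cos_45 h2 field_simps blk_eq_iff)
qed

lemma x0_D: "(\<lambda>k. DGf R L T k x0) = fD R L T"
proof
  fix k :: 4
  show "DGf R L T k x0 = fD R L T k"
    using exhaust_4[of k]
    by (auto simp: DGf_def fD_def x0_comp Mr_def Mt_def sin_45 cos_45 h2 field_simps blk_eq_iff blk_zero)
qed

lemma x0_D2: "(\<lambda>l k. D2Gf R L T l k x0) = fD2 R L T"
proof (intro ext)
  fix l k :: 4
  show "D2Gf R L T l k x0 = fD2 R L T l k"
    using exhaust_4[of k] exhaust_4[of l]
    by (auto simp: D2Gf_def fD2_def x0_comp Mrr_def Mrt_def Mtt_def sin_45 cos_45 h2 field_simps blk_eq_iff blk_zero)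
qed

lemma x0_G: "Mf R L T (x0$1) (x0$2) $ 1 $ 1 = R" "Mf R L T (x0$1) (x0$2) $ 3 $ 3 = L / 2"
  "Mf R L T (x0$1) (x0$2) $ 4 $ 4 = T / 2"
  unfolding x0_comp Mf_def blk_entries EA_def EP_def EQq_def
  by (simp_all add: sin_45 cos_45 h2)


lemma sph_E:
  fixes R p q :: real
  shows "EA R R R p q = R" "EB R R R p q = 0" "EC R R R p q = R * sin p ^ 2"
    "EP R R R p q = R * sin p ^ 2 * cos q ^ 2" "EQq R R R p q = R * sin p ^ 2 * sin q ^ 2"
    "ED R R R p q = R^2 * sin p ^ 2"
  unfolding EA_def EB_def EC_def EP_def EQq_def ED_eq
  by (simp_all add: cos_squared_eq algebra_simps power2_eq_square[of R])

lemma sph_N: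
  fixes R :: real and x :: "real^4"
  assumes "R > 0" "sin (x$1) > 0"
  shows "Ninv R R R (x$1) (x$2) = sN R (sin (x$1)) (cos (x$1)) (sin (x$2)) (cos (x$2))"
  unfolding Ninv_def sN_def sph_E blk_eq_iff using assms by (simp add: power2_eq_square)

lemma sph_D:
  fixes R :: real and x :: "real^4"
  shows "(\<lambda>k. DGf R R R k x) = sD R (sin (x$1)) (cos (x$1)) (sin (x$2)) (cos (x$2))"
proof
  fix k :: 4
  have m: "Mr R R R (x$1) (x$2) = sD R (sin (x$1)) (cos (x$1)) (sin (x$2)) (cos (x$2)) 1"
    "Mt R R R (x$1) (x$2) = sD R (sin (x$1)) (cos (x$1)) (sin (x$2)) (cos (x$2)) 2"
    unfolding Mr_def Mt_def sD_simps blk_eq_iff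
    by (simp_all add: cos_squared_eq algebra_simps)
  show "DGf R R R k x = sD R (sin (x$1)) (cos (x$1)) (sin (x$2)) (cos (x$2)) k"
    using exhaust_4[of k] m by (auto simp: DGf_def sD_simps)
qed

lemma sph_D2:
  fixes R :: real and x :: "real^4"
  shows "(\<lambda>l k. D2Gf R R R l k x) = sD2 R (sin (x$1)) (cos (x$1)) (sin (x$2)) (cos (x$2))"
proof (intro ext)
  fix l k :: 4
  have m: "Mrr R R R (x$1) (x$2) = sD2 R (sin (x$1)) (cos (x$1)) (sin (x$2)) (cos (x$2)) 1 1"
    "Mrt R R R (x$1) (x$2) = sD2 R (sin (x$1)) (cos (x$1)) (sin (x$2)) (cos (x$2)) 2 1"
    "Mrt R R R (x$1) (x$2) = sD2 R (sin (x$1)) (cos (x$1)) (sin (x$2)) (cos (x$2)) 1 2"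
    "Mtt R R R (x$1) (x$2) = sD2 R (sin (x$1)) (cos (x$1)) (sin (x$2)) (cos (x$2)) 2 2"
    unfolding Mrr_def Mrt_def Mtt_def sD2_simps blk_eq_iff
    by (simp_all add: cos_squared_eq algebra_simps)
  show "D2Gf R R R l k x = sD2 R (sin (x$1)) (cos (x$1)) (sin (x$2)) (cos (x$2)) l k"
    using exhaust_4[of k] exhaust_4[of l] m by (auto simp: D2Gf_def sD2_simps)
qed

lemma sph_G:
  fixes R :: real and x :: "real^4"
  shows "Mf R R R (x$1) (x$2) = blk R 0 (R * sin (x$1) ^ 2) (R * sin (x$1) ^ 2 * cos (x$2) ^ 2) (R * sin (x$1) ^ 2 * sin (x$2) ^ 2)"
  unfolding Mf_def sph_E ..

theorem mainTheorem1:
  fixes r l lt :: real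
  assumes "r > 0" and "l > 0" and "lt > 0"
  shows "einstein_on (ell_metric r l lt) ell_chart \<longleftrightarrow> (r = l \<and> l = lt)"
proof
  assume "einstein_on (ell_metric r l lt) ell_chart"
  then obtain c where c: "\<And>x i j. x \<in> ell_chart \<Longrightarrow> ricci (ell_metric r l lt) i j x = c * ell_metric r l lt x $ i $ j"
    unfolding einstein_on_def by blast
  have pos: "r^2 > 0" "l^2 > 0" "lt^2 > 0" using assms by auto
  have R: "ricci (ell_metric r l lt) i i x0 = RicF (fN (r^2) (l^2) (lt^2) (l^2 + lt^2)) (fD (r^2) (l^2) (lt^2)) (fD2 (r^2) (l^2) (lt^2)) i i" for i
    using ricci_ell[OF assms x0_chart, of i i] unfolding x0_N[OF pos] x0_D x0_D2 .
  have G: "ell_metric r l lt x0 $ 1 $ 1 = r^2" "ell_metric r l lt x0 $ 3 $ 3 = l^2 / 2" "ell_metric r l lt x0 $ 4 $ 4 = lt^2 / 2"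
    unfolding metric_eq[OF assms(2,3)] x0_G by simp_all
  note V = fwd_vals[OF pos refl]
  have e1: "2 + 4 * l^2 * lt^2 / (l^2 + lt^2)^2 = c * r^2"
    using c[OF x0_chart, of 1 1] R[of 1] V(1) G(1) by simp
  have e3: "l^2 * lt^2 / (r^2 * (l^2 + lt^2)) + l^2 / (l^2 + lt^2) + 2 * l^2 * lt^2 / (l^2 + lt^2)^2 = c * (l^2 / 2)"
    using c[OF x0_chart, of 3 3] R[of 3] V(2) G(2) by simp
  have e4: "l^2 * lt^2 / (r^2 * (l^2 + lt^2)) + lt^2 / (l^2 + lt^2) + 2 * l^2 * lt^2 / (l^2 + lt^2)^2 = c * (lt^2 / 2)"
    using c[OF x0_chart, of 4 4] R[of 4] V(3) G(3) by simp
  have "l^2 = lt^2 \<and> r^2 = l^2" using fwd_alg[OF pos refl e1 e3 e4] .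
  then show "r = l \<and> l = lt" using assms by (simp add: power2_eq_iff_nonneg)
next
  assume eq: "r = l \<and> l = lt"
  then have hl: "l = r" "lt = r" by auto
  show "einstein_on (ell_metric r l lt) ell_chart"
    unfolding hl
    unfolding einstein_on_def
  proof (intro exI[of _ "3 / r^2"] ballI allI)
    fix x i j assume x: "x \<in> ell_chart"
    have s: "sin (x$1) > 0" using x by (auto simp: ell_chart_def intro: sin_gt_zero)
    have S: "sin (x$2) > 0" using x by (auto simp: ell_chart_def intro: sin_gt_zero)
    have K: "cos (x$2) > 0" using x by (auto simp: ell_chart_def intro: cos_gt_zero)
    have R: "r^2 > 0" using assms by simp
    have "ricci (ell_metric r r r) i j x = RicF (sN (r^2) (sin (x$1)) (cos (x$1)) (sin (x$2)) (cos (x$2)))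
       (sD (r^2) (sin (x$1)) (cos (x$1)) (sin (x$2)) (cos (x$2))) (sD2 (r^2) (sin (x$1)) (cos (x$1)) (sin (x$2)) (cos (x$2))) i j"
      using ricci_ell[OF assms(1) assms(1) assms(1) x, of i j] unfolding sph_N[OF R s] sph_D sph_D2 .
    also have "\<dots> = 3 / r^2 * blk (r^2) 0 (r^2 * sin (x$1) ^ 2) (r^2 * sin (x$1) ^ 2 * cos (x$2) ^ 2) (r^2 * sin (x$1) ^ 2 * sin (x$2) ^ 2) $ i $ j"
      using sph_all[OF R s S K] by (simp add: sin_cos_squared_add)
    also have "\<dots> = 3 / r^2 * ell_metric r r r x $ i $ j"
      unfolding metric_eq[OF assms(1,1)] sph_G ..
    finally show "ricci (ell_metric r r r) i j x = 3 / r^2 * ell_metric r r r x $ i $ j" .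
  qed
qed


end
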